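(* Let $\Phi:\mathbb R\to\mathbb R$ and $\hbar:[0,1]\to\mathbb R$ be differentiable functions such that $\Phi$ is strictly monotone, and for every $0\le c\le1$ the function $\hbar_c(x)=\hbar(x)+\hbar(c-x)$ is strictly monotone on $[0,c/2]$ and $\Phi(\hbar_c)$ is strictly increasing on $[0,c/2]$. Let $m,n\ge2$ and let $\mathbf p\in\mathbb R^m$, $\mathbf q\in\mathbb R^n$ be probability vectors with all entries strictly positive. Then the $(\Phi,\hbar)$-entropy $H(P)=\Phi\big(\sum_{i=1}^m\sum_{j=1}^n\hbar(p_{i,j})\big)$ is strict Schur-concave on $\mathcal C(\mathbf p,\mathbf q)$.
   Context: $\mathcal C(\mathbf p,\mathbf q)$: nonnegative $m\times n$ matrices $P=(p_{i,j})$ with row sums $p_i$, column sums $q_j$, viewed as vectors in $\mathbb R^{mn}$. Majorization: for $x,y\in\mathbb R^N$ with decreasing rearrangements $\bar x,\bar y$ and $F_{\bar x}(i)=\sum_{k\le i}\bar x_k$, $x\preceq y$ if $F_{\bar x}(i)\le F_{\bar y}(i)$ for $1\le i<N$ and $F_{\bar x}(N)=F_{\bar y}(N)$; $x\prec y$ if moreover strict inequality holds for some $i<N$. A symmetric function $\Psi$ is strict Schur-concave if $x\preceq y$ implies $\Psi(x)\ge\Psi(y)$ and $x\prec y$ implies $\Psi(x)>\Psi(y)$. *)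

theory Defs
  imports "HOL-Analysis.Analysis"
begin

text \<open>Vectors of R^N are represented as real lists of length N.\<close>

definition dec_rearr :: "real list \<Rightarrow> real list" where
  "dec_rearr x = rev (sort x)"

definition partial_sums :: "real list \<Rightarrow> nat \<Rightarrow> real" where
  "partial_sums x i = sum_list (take i (dec_rearr x))"

definition majorized_le :: "real list \<Rightarrow> real list \<Rightarrow> bool" (infix "\<preceq>\<^sub>M" 50) where
  "x \<preceq>\<^sub>M y \<longleftrightarrow> length x = length y \<and>
     (\<forall>i. 1 \<le> i \<and> i < length x \<longrightarrow> partial_sums x i \<le> partial_sums y i) \<and>
     partial_sums x (length x) = partial_sums y (length y)"

definition majorized_lt :: "real list \<Rightarrow> real list \<Rightarrow> bool" (infix "\<prec>\<^sub>M" 50) where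
  "x \<prec>\<^sub>M y \<longleftrightarrow> x \<preceq>\<^sub>M y \<and>
     (\<exists>i. 1 \<le> i \<and> i < length x \<and> partial_sums x i < partial_sums y i)"

definition strict_schur_concave_on :: "real list set \<Rightarrow> (real list \<Rightarrow> real) \<Rightarrow> bool" where
  "strict_schur_concave_on S \<Psi> \<longleftrightarrow>
     (\<forall>x y. mset x = mset y \<longrightarrow> \<Psi> x = \<Psi> y) \<and>
     (\<forall>x\<in>S. \<forall>y\<in>S. (x \<preceq>\<^sub>M y \<longrightarrow> \<Psi> x \<ge> \<Psi> y) \<and> (x \<prec>\<^sub>M y \<longrightarrow> \<Psi> x > \<Psi> y))"

text \<open>m x n matrices as functions nat => nat => real (entries outside range are 0).\<close>
definition transport_polytope ::
  "nat \<Rightarrow> nat \<Rightarrow> (nat \<Rightarrow> real) \<Rightarrow> (nat \<Rightarrow> real) \<Rightarrow> (nat \<Rightarrow> nat \<Rightarrow> real) set" where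
  "transport_polytope m n p q = {P.
     (\<forall>i<m. \<forall>j<n. 0 \<le> P i j) \<and>
     (\<forall>i<m. (\<Sum>j<n. P i j) = p i) \<and>
     (\<forall>j<n. (\<Sum>i<m. P i j) = q j) \<and>
     (\<forall>i j. \<not> (i < m \<and> j < n) \<longrightarrow> P i j = 0)}"

definition mat_vec :: "nat \<Rightarrow> nat \<Rightarrow> (nat \<Rightarrow> nat \<Rightarrow> real) \<Rightarrow> real list" where
  "mat_vec m n P = concat (map (\<lambda>i. map (\<lambda>j. P i j) [0..<n]) [0..<m])"

definition phi_h_entropy :: "(real \<Rightarrow> real) \<Rightarrow> (real \<Rightarrow> real) \<Rightarrow> real list \<Rightarrow> real" where
  "phi_h_entropy \<Phi> h x = \<Phi> (sum_list (map h x))"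

end

theory Submission
  imports Defs
begin


lemma tstep:
  fixes \<Phi> h :: "real \<Rightarrow> real"
  assumes mono: "strict_mono \<Phi> \<or> strict_antimono_on UNIV \<Phi>"
    and hc: "\<And>c. 0 \<le> c \<Longrightarrow> c \<le> 1 \<Longrightarrow>
           strict_mono_on {0..c/2} (\<lambda>x. \<Phi> (h x + h (c - x)))"
    and t: "0 \<le> t0" "t0 < t1" "t1 \<le> c/2" "c \<le> 1"
  shows "\<Phi> (S + (h t0 + h (c - t0))) < \<Phi> (S + (h t1 + h (c - t1)))"
proof -
  have c0: "0 \<le> c" using t by linarith
  have 1: "\<Phi> (h t0 + h (c - t0)) < \<Phi> (h t1 + h (c - t1))"
    using strict_mono_onD[OF hc[OF c0 t(4)]] t by auto
  from mono show ?thesis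
  proof
    assume sm: "strict_mono \<Phi>"
    have "h t0 + h (c - t0) < h t1 + h (c - t1)"
    proof (rule ccontr)
      assume "\<not> ?thesis"
      hence "h t1 + h (c - t1) \<le> h t0 + h (c - t0)" by simp
      hence "\<Phi> (h t1 + h (c - t1)) \<le> \<Phi> (h t0 + h (c - t0))"
        using sm by (metis order_le_less strict_monoD)
      thus False using 1 by simp
    qed
    thus ?thesis using sm by (simp add: strict_monoD)
  next
    assume sm: "strict_antimono_on UNIV \<Phi>"
    have "h t1 + h (c - t1) < h t0 + h (c - t0)"
    proof (rule ccontr)
      assume "\<not> ?thesis"
      hence "h t0 + h (c - t0) \<le> h t1 + h (c - t1)" by simp
      hence "\<Phi> (h t1 + h (c - t1)) \<le> \<Phi> (h t0 + h (c - t0))"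
        using sm by (metis order_le_less monotone_onD UNIV_I)
      thus False using 1 by simp
    qed
    thus ?thesis using sm by (metis monotone_onD UNIV_I add_less_cancel_left)
  qed
qed

lemma sum_upd2:
  fixes b :: "nat \<Rightarrow> real"
  assumes "j \<noteq> k"
  shows "(\<Sum>l<i. (b(j := b j - d, k := b k + d)) l) = (\<Sum>l<i. b l) - (if j < i then d else 0) + (if k < i then d else 0)"
proof -
  have "\<And>l. (b(j := b j - d, k := b k + d)) l = b l + ((if l = j then - d else 0) + (if l = k then d else 0))"
    using assms by auto
  hence "(\<Sum>l<i. (b(j := b j - d, k := b k + d)) l) = (\<Sum>l<i. b l) + ((\<Sum>l<i. (if l = j then - d else 0)) + (\<Sum>l<i. (if l = k then d else 0)))"
    by (simp add: sum.distrib)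
  also have "\<dots> = (\<Sum>l<i. b l) - (if j < i then d else 0) + (if k < i then d else 0)"
    by (simp add: sum.delta)
  finally show ?thesis .
qed

lemma main:
  fixes a :: "nat \<Rightarrow> real" and \<Phi> h :: "real \<Rightarrow> real"
  assumes tstep: "\<And>S t0 t1 c. 0 \<le> t0 \<Longrightarrow> t0 < t1 \<Longrightarrow> t1 \<le> c/2 \<Longrightarrow> c \<le> 1 \<Longrightarrow>
     \<Phi> (S + (h t0 + h (c - t0))) < \<Phi> (S + (h t1 + h (c - t1)))"
    and asort: "\<And>i i'. i \<le> i' \<Longrightarrow> i' < N \<Longrightarrow> a i' \<le> a i"
    and anonneg: "\<And>i. i < N \<Longrightarrow> 0 \<le> a i"
  shows "card {i. i < N \<and> a i \<noteq> b i} = K \<Longrightarrow>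
    (\<forall>i i'. i \<le> i' \<longrightarrow> i' < N \<longrightarrow> b i' \<le> b i) \<Longrightarrow> (\<forall>i<N. 0 \<le> b i) \<Longrightarrow>
    (\<Sum>i<N. b i) \<le> 1 \<Longrightarrow> (\<forall>i\<le>N. (\<Sum>k<i. a k) \<le> (\<Sum>k<i. b k)) \<Longrightarrow>
    (\<Sum>k<N. a k) = (\<Sum>k<N. b k) \<Longrightarrow> (\<exists>i<N. a i \<noteq> b i) \<Longrightarrow>
    \<Phi> (\<Sum>i<N. h (b i)) < \<Phi> (\<Sum>i<N. h (a i))"
proof (induction K arbitrary: b rule: less_induct)
  case (less K b)
  note bsort = less.prems(2) and bnonneg = less.prems(3) and bsum = less.prems(4)
    and part = less.prems(5) and tot = less.prems(6) and ne = less.prems(7)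
  have exk: "\<exists>k. k < N \<and> b k < a k"
  proof (rule ccontr)
    assume "\<not> ?thesis"
    hence le: "\<forall>i\<in>{..<N}. a i \<le> b i" by force
    from ne obtain i where i: "i < N" "a i \<noteq> b i" by blast
    with le have "a i < b i" by force
    hence "(\<Sum>k<N. a k) < (\<Sum>k<N. b k)"
      using sum_strict_mono_ex1[OF _ le] i by blast
    with tot show False by simp
  qed
  define k where "k = (LEAST k. k < N \<and> b k < a k)"
  have k: "k < N" "b k < a k" using LeastI_ex[OF exk] unfolding k_def by auto
  have bk: "\<And>i. i < k \<Longrightarrow> a i \<le> b i"
    using not_less_Least[of _ "\<lambda>k. k < N \<and> b k < a k"] k unfolding k_def[symmetric]
    by (metis not_less order.strict_trans)
  have "(\<Sum>l<Suc k. a l) \<le> (\<Sum>l<Suc k. b l)" using part k(1) Suc_leI by blast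
  hence lt: "(\<Sum>l<k. a l) < (\<Sum>l<k. b l)" using k by simp
  define J where "J = {i. i < k \<and> a i < b i}"
  have J: "finite J" "J \<noteq> {}"
  proof -
    show "finite J" unfolding J_def by simp
    show "J \<noteq> {}"
    proof
      assume "J = {}"
      hence "\<forall>i\<in>{..<k}. b i \<le> a i" unfolding J_def by force
      hence "(\<Sum>l<k. b l) \<le> (\<Sum>l<k. a l)" by (intro sum_mono) blast
      with lt show False by simp
    qed
  qed
  define j where "j = Max J"
  have j: "j < k" "a j < b j" using Max_in[OF J] unfolding j_def J_def by auto
  have mid: "\<And>i. j < i \<Longrightarrow> i < k \<Longrightarrow> b i = a i"
  proof -
    fix i assume i: "j < i" "i < k"
    have "i \<notin> J" using Max_ge[OF J(1)] i unfolding j_def[symmetric] by force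
    thus "b i = a i" using bk[OF i(2)] i unfolding J_def by force
  qed
  define d where "d = min (b j - a j) (a k - b k)"
  have d: "d > 0" "d \<le> b j - a j" "d \<le> a k - b k" using j k unfolding d_def by auto
  define b' where "b' = b(j := b j - d, k := b k + d)"
  have jk: "j \<noteq> k" using j by simp
  have b'j: "b' j = b j - d" and b'k: "b' k = b k + d" and b'o: "\<And>l. l \<noteq> j \<Longrightarrow> l \<noteq> k \<Longrightarrow> b' l = b l"
    unfolding b'_def using jk by auto
  have jN: "j < N" using j k by simp
  have b'sort: "\<forall>i i'. i \<le> i' \<longrightarrow> i' < N \<longrightarrow> b' i' \<le> b' i"
  proof (intro allI impI)
    fix i i' assume ii: "i \<le> i'" "i' < N"
    have aj: "a j \<le> b' j" "b' j \<le> b j" and ak: "b k \<le> b' k" "b' k \<le> a k" using b'j b'k d by auto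
    have ajk: "a k \<le> a j" using asort j k by simp
    show "b' i' \<le> b' i"
    proof (cases "i = i'")
      case True thus ?thesis by simp
    next
      case False
      hence lt: "i < i'" using ii by simp
      have B: "b i' \<le> b i" using bsort ii by blast
      consider "i = j" | "i = k" | "i \<noteq> j \<and> i \<noteq> k" by blast
      thus ?thesis
      proof cases
        case 1
        then consider "i' = k" | "i' < k" "i' \<noteq> j" | "k < i'" using lt by force
        thus ?thesis
        proof cases
          case 1 thus ?thesis using aj ak ajk \<open>i = j\<close> by simp
        next
          case 2 thus ?thesis using aj mid[of i'] asort[of j i'] lt ii \<open>i = j\<close> b'o[of i'] jk by auto
        next
          case 3
          have "b i' \<le> b k" using bsort 3 ii by simp
          moreover have "b' i' = b i'" using b'o 3 j by simp
          ultimately show ?thesis using aj ak ajk \<open>i = j\<close> by simp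
        qed
      next
        case 2
        hence "i' \<noteq> j" "i' \<noteq> k" using lt j by auto
        thus ?thesis using ak B 2 b'o[of i'] by simp
      next
        case 3
        hence bi: "b' i = b i" using b'o by simp
        consider "i' = j" | "i' = k" | "i' \<noteq> j \<and> i' \<noteq> k" by blast
        thus ?thesis
        proof cases
          case 1 thus ?thesis using aj B bi by simp
        next
          case 2
          show ?thesis
          proof (cases "i < j")
            case True thus ?thesis using bi bsort[rule_format, of i j] jN ak aj ajk 2 by simp
          next
            case False
            hence "j < i" using 3 by (metis linorder_neqE_nat)
            hence "b i = a i" using mid lt 2 by simp
            thus ?thesis using bi ak asort[of i k] lt 2 k by simp
          qed
        next
          case 3 thus ?thesis using bi B b'o by simp
        qed
      qed
    qed
  qed
  have b'nonneg: "\<forall>i<N. 0 \<le> b' i"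
  proof (intro allI impI)
    fix i assume i: "i < N"
    show "0 \<le> b' i"
    proof (cases "i = j \<or> i = k")
      case True thus ?thesis using bnonneg anonneg[OF jN] b'j b'k d k by auto
    next
      case False thus ?thesis using bnonneg i b'o by simp
    qed
  qed
  have ps: "\<And>i. (\<Sum>l<i. b' l) = (\<Sum>l<i. b l) - (if j < i then d else 0) + (if k < i then d else 0)"
    unfolding b'_def by (rule sum_upd2[OF jk])
  have b'tot: "(\<Sum>l<N. b' l) = (\<Sum>l<N. b l)" using ps[of N] jN k by simp
  have midsum: "\<And>i. Suc j \<le> i \<Longrightarrow> i \<le> k \<Longrightarrow> (\<Sum>l<i. b l - a l) = (\<Sum>l<Suc j. b l - a l)"
  proof -
    fix i assume "Suc j \<le> i" "i \<le> k"
    thus "(\<Sum>l<i. b l - a l) = (\<Sum>l<Suc j. b l - a l)"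
    proof (induction i rule: dec_induct)
      case base thus ?case by simp
    next
      case (step i) thus ?case using mid[of i] by simp
    qed
  qed
  have b'part: "\<forall>i\<le>N. (\<Sum>l<i. a l) \<le> (\<Sum>l<i. b' l)"
  proof (intro allI impI)
    fix i assume iN: "i \<le> N"
    consider "i \<le> j" | "j < i" "i \<le> k" | "k < i" by force
    thus "(\<Sum>l<i. a l) \<le> (\<Sum>l<i. b' l)"
    proof cases
      case 1 thus ?thesis using ps[of i] part iN j by simp
    next
      case 2
      have "(\<Sum>l<i. b l - a l) = (\<Sum>l<j. b l - a l) + (b j - a j)"
        using midsum[of i] 2 by simp
      moreover have "(\<Sum>l<j. a l) \<le> (\<Sum>l<j. b l)" using part jN by simp
      ultimately have "(\<Sum>l<i. a l) + d \<le> (\<Sum>l<i. b l)" using d by (simp add: sum_subtractf)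
      thus ?thesis using ps[of i] 2 by simp
    next
      case 3 thus ?thesis using ps[of i] part iN j by simp
    qed
  qed
  have b'ne: "{i. i < N \<and> a i \<noteq> b' i} \<subset> {i. i < N \<and> a i \<noteq> b i}"
  proof
    show "{i. i < N \<and> a i \<noteq> b' i} \<subseteq> {i. i < N \<and> a i \<noteq> b i}"
    proof (intro subsetI CollectI conjI)
      fix i assume "i \<in> {i. i < N \<and> a i \<noteq> b' i}"
      hence i: "i < N" "a i \<noteq> b' i" by auto
      thus "i < N" by simp
      show "a i \<noteq> b i"
      proof (cases "i = j \<or> i = k")
        case True thus ?thesis using j k by auto
      next
        case False thus ?thesis using i b'o by simp
      qed
    qed
    have "j \<in> {i. i < N \<and> a i \<noteq> b i}" "k \<in> {i. i < N \<and> a i \<noteq> b i}" using j k jN by auto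
    moreover have "a j = b' j \<or> a k = b' k" using b'j b'k d_def by (auto simp: min_def)
    ultimately show "{i. i < N \<and> a i \<noteq> b' i} \<noteq> {i. i < N \<and> a i \<noteq> b i}" by blast
  qed
  hence cardlt: "card {i. i < N \<and> a i \<noteq> b' i} < K"
    using less.prems(1) psubset_card_mono[OF _ b'ne] by simp
  have step: "\<Phi> (\<Sum>i<N. h (b i)) < \<Phi> (\<Sum>i<N. h (b' i))"
  proof -
    define S where "S = (\<Sum>l\<in>{..<N} - {j} - {k}. h (b l))"
    have S': "S = (\<Sum>l\<in>{..<N} - {j} - {k}. h (b' l))" unfolding S_def
      by (rule sum.cong) (auto simp: b'o)
    have dec: "\<And>g::nat \<Rightarrow> real. (\<Sum>l<N. g l) = g j + (g k + (\<Sum>l\<in>{..<N} - {j} - {k}. g l))"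
    proof -
      fix g :: "nat \<Rightarrow> real"
      have "(\<Sum>l<N. g l) = g j + (\<Sum>l\<in>{..<N} - {j}. g l)" using jN by (simp add: sum.remove)
      moreover have "(\<Sum>l\<in>{..<N} - {j}. g l) = g k + (\<Sum>l\<in>{..<N} - {j} - {k}. g l)"
        using k jk by (subst sum.remove[of _ k]) auto
      ultimately show "(\<Sum>l<N. g l) = g j + (g k + (\<Sum>l\<in>{..<N} - {j} - {k}. g l))" by simp
    qed
    have e1: "(\<Sum>i<N. h (b i)) = S + (h (b k) + h ((b j + b k) - b k))"
      using dec[of "\<lambda>l. h (b l)"] unfolding S_def by simp
    have e2: "(\<Sum>i<N. h (b' i)) = S + (h (b k + d) + h ((b j + b k) - (b k + d)))"
    proof -
      have "(\<Sum>i<N. h (b' i)) = h (b' j) + (h (b' k) + S)" using dec[of "\<lambda>l. h (b' l)"] unfolding S' .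
      moreover have "(b j + b k) - (b k + d) = b j - d" by simp
      ultimately show ?thesis unfolding b'j b'k by simp
    qed
    have "b' k \<le> b' j" using b'sort[rule_format, of j k] j k by simp
    hence t1: "b k + d \<le> (b j + b k) / 2" using b'j b'k by simp
    have "b j + b k \<le> (\<Sum>l<N. b l)"
    proof -
      have "0 \<le> (\<Sum>l\<in>{..<N} - {j} - {k}. b l)" using bnonneg by (intro sum_nonneg) auto
      thus ?thesis using dec[of b] by simp
    qed
    hence c1: "b j + b k \<le> 1" using bsum by simp
    have bk0: "0 \<le> b k" using bnonneg k by simp
    have dd: "b k < b k + d" using d by simp
    show ?thesis unfolding e1 e2
      by (rule tstep[OF bk0 dd t1 c1])
  qed
  show ?case
  proof (cases "\<exists>i<N. a i \<noteq> b' i")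
    case True
    have "\<Phi> (\<Sum>i<N. h (b' i)) < \<Phi> (\<Sum>i<N. h (a i))"
      using less.IH[OF cardlt refl b'sort b'nonneg _ b'part _ True] b'tot bsum tot by simp
    thus ?thesis using step by simp
  next
    case False
    hence "(\<Sum>i<N. h (b' i)) = (\<Sum>i<N. h (a i))" by (intro sum.cong) auto
    thus ?thesis using step by simp
  qed
qed

lemma sum_list_concat': "sum_list (concat xss) = sum_list (map sum_list (xss :: real list list))"
  by (induction xss) auto

lemma sum_list_nth': "sum_list (xs :: real list) = (\<Sum>i<length xs. xs ! i)"
  by (simp add: sum_list_sum_nth atLeast0LessThan)

lemma sum_list_map_upt': "sum_list (map (f :: nat \<Rightarrow> real) [0..<k]) = (\<Sum>i<k. f i)"
  by (simp add: sum_set_upt_conv_sum_list_nat[symmetric] atLeast0LessThan)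

lemma len_dec: "length (dec_rearr x) = length x"
  by (simp add: dec_rearr_def)

lemma mset_dec: "mset (dec_rearr x) = mset x"
  by (simp add: dec_rearr_def)

lemma set_dec: "set (dec_rearr x) = set x"
  by (simp add: dec_rearr_def)

lemma dec_sorted: "i \<le> i' \<Longrightarrow> i' < length x \<Longrightarrow> dec_rearr x ! i' \<le> dec_rearr x ! i"
  unfolding dec_rearr_def
  by (simp add: rev_nth sorted_nth_mono)

lemma ps_eq: "i \<le> length x \<Longrightarrow> partial_sums x i = (\<Sum>k<i. dec_rearr x ! k)"
  unfolding partial_sums_def
  by (simp add: sum_list_nth' len_dec min_def)

lemma sum_list_mset_eq: "mset x = mset y \<Longrightarrow> sum_list (map (h :: real \<Rightarrow> real) x) = sum_list (map h y)"
  by (metis mset_map sum_mset_sum_list)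

lemma hsum: "sum_list (map (h :: real \<Rightarrow> real) x) = (\<Sum>k<length x. h (dec_rearr x ! k))"
proof -
  have "sum_list (map h x) = sum_list (map h (dec_rearr x))"
    by (rule sum_list_mset_eq) (simp add: mset_dec)
  also have "\<dots> = (\<Sum>k<length x. h (dec_rearr x ! k))"
    by (simp add: sum_list_nth' len_dec)
  finally show ?thesis .
qed

lemma matvec_props:
  assumes "P \<in> transport_polytope m n p q" "(\<Sum>i<m. p i) = 1"
  shows "\<forall>v\<in>set (mat_vec m n P). 0 \<le> v" "sum_list (mat_vec m n P) = 1"
proof -
  show "\<forall>v\<in>set (mat_vec m n P). 0 \<le> v"
    using assms(1) unfolding mat_vec_def transport_polytope_def by auto
  have "sum_list (mat_vec m n P) = (\<Sum>i<m. \<Sum>j<n. P i j)"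
    unfolding mat_vec_def sum_list_concat' map_map comp_def sum_list_map_upt' ..
  also have "\<dots> = (\<Sum>i<m. p i)" using assms(1) unfolding transport_polytope_def by simp
  finally show "sum_list (mat_vec m n P) = 1" using assms(2) by simp
qed

lemma vec_main:
  fixes \<Phi> h :: "real \<Rightarrow> real"
  assumes tstep: "\<And>S t0 t1 c. 0 \<le> t0 \<Longrightarrow> t0 < t1 \<Longrightarrow> t1 \<le> c/2 \<Longrightarrow> c \<le> 1 \<Longrightarrow>
     \<Phi> (S + (h t0 + h (c - t0))) < \<Phi> (S + (h t1 + h (c - t1)))"
    and xn: "\<forall>v\<in>set x. 0 \<le> v" and yn: "\<forall>v\<in>set y. 0 \<le> v" and ys: "sum_list y \<le> 1"
    and maj: "x \<preceq>\<^sub>M y"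
  shows "\<Phi> (sum_list (map h y)) \<le> \<Phi> (sum_list (map h x))"
    and "x \<prec>\<^sub>M y \<Longrightarrow> \<Phi> (sum_list (map h y)) < \<Phi> (sum_list (map h x))"
proof -
  define N where "N = length x"
  have lens: "length y = N" using maj unfolding majorized_le_def N_def by simp
  have mj1: "\<And>i. 1 \<le> i \<Longrightarrow> i < N \<Longrightarrow> partial_sums x i \<le> partial_sums y i"
    using maj unfolding majorized_le_def N_def by blast
  have mj2: "partial_sums x N = partial_sums y N"
    using maj unfolding majorized_le_def N_def by metis
  define a where "a = (\<lambda>k. dec_rearr x ! k)"
  define b where "b = (\<lambda>k. dec_rearr y ! k)"
  have asort: "\<And>i i'. i \<le> i' \<Longrightarrow> i' < N \<Longrightarrow> a i' \<le> a i"
    unfolding a_def N_def by (rule dec_sorted)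
  have bsort: "\<forall>i i'. i \<le> i' \<longrightarrow> i' < N \<longrightarrow> b i' \<le> b i"
    unfolding b_def using dec_sorted[of _ _ y] lens by auto
  have anonneg: "\<And>i. i < N \<Longrightarrow> 0 \<le> a i"
    unfolding a_def N_def using xn nth_mem[of _ "dec_rearr x"] set_dec[of x] len_dec[of x] by auto
  have bnonneg: "\<forall>i<N. 0 \<le> b i"
    unfolding b_def using yn nth_mem[of _ "dec_rearr y"] set_dec[of y] len_dec[of y] lens by auto
  have bsum: "(\<Sum>i<N. b i) \<le> 1"
  proof -
    have "sum_list (dec_rearr y) = sum_list y"
    proof -
      have "sum_mset (mset (dec_rearr y)) = sum_mset (mset y)" by (simp only: mset_dec)
      thus ?thesis by (simp only: sum_mset_sum_list)
    qed
    thus ?thesis using ys sum_list_nth'[of "dec_rearr y"] unfolding b_def len_dec lens by simp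
  qed
  have pa: "\<And>i. i \<le> N \<Longrightarrow> partial_sums x i = (\<Sum>k<i. a k)"
    unfolding a_def N_def by (rule ps_eq)
  have pb: "\<And>i. i \<le> N \<Longrightarrow> partial_sums y i = (\<Sum>k<i. b k)"
    unfolding b_def using ps_eq[of _ y] lens by simp
  have part: "\<forall>i\<le>N. (\<Sum>k<i. a k) \<le> (\<Sum>k<i. b k)"
  proof (intro allI impI)
    fix i assume i: "i \<le> N"
    show "(\<Sum>k<i. a k) \<le> (\<Sum>k<i. b k)"
    proof (cases "i = 0")
      case True thus ?thesis by simp
    next
      case False
      show ?thesis
      proof (cases "i = N")
        case True thus ?thesis using mj2 pa pb by simp
      next
        case F2: False
        hence "partial_sums x i \<le> partial_sums y i" using mj1 i False by simp
        thus ?thesis using pa pb i by simp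
      qed
    qed
  qed
  have tot: "(\<Sum>k<N. a k) = (\<Sum>k<N. b k)"
    using mj2 pa pb by simp
  have hx: "sum_list (map h x) = (\<Sum>i<N. h (a i))" unfolding a_def N_def by (rule hsum)
  have hy: "sum_list (map h y) = (\<Sum>i<N. h (b i))" unfolding b_def using hsum[of h y] lens by simp
  have strict: "(\<exists>i<N. a i \<noteq> b i) \<Longrightarrow> \<Phi> (sum_list (map h y)) < \<Phi> (sum_list (map h x))"
    unfolding hx hy
    by (rule main[where \<Phi>=\<Phi> and h=h and N=N and a=a and b=b, OF tstep asort anonneg refl bsort bnonneg bsum part tot]) auto
  show "\<Phi> (sum_list (map h y)) \<le> \<Phi> (sum_list (map h x))"
  proof (cases "\<exists>i<N. a i \<noteq> b i")
    case True thus ?thesis using strict by fastforce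
  next
    case False
    hence "(\<Sum>i<N. h (a i)) = (\<Sum>i<N. h (b i))" by (intro sum.cong) auto
    thus ?thesis unfolding hx hy by simp
  qed
  assume lt: "x \<prec>\<^sub>M y"
  then obtain i where i: "1 \<le> i" "i < N" "partial_sums x i < partial_sums y i"
    unfolding majorized_lt_def N_def by blast
  have "\<exists>i<N. a i \<noteq> b i"
  proof (rule ccontr)
    assume "\<not> ?thesis"
    hence "(\<Sum>k<i. a k) = (\<Sum>k<i. b k)" using i by (intro sum.cong) auto
    thus False using i pa pb by simp
  qed
  thus "\<Phi> (sum_list (map h y)) < \<Phi> (sum_list (map h x))" by (rule strict)
qed


theorem proposition4p1:
  fixes \<Phi> h :: "real \<Rightarrow> real" and m n :: nat and p q :: "nat \<Rightarrow> real"
  assumes "\<Phi> differentiable_on UNIV"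
    and "h differentiable_on {0..1}"
    and "strict_mono \<Phi> \<or> strict_antimono_on UNIV \<Phi>"
    and "\<And>c. 0 \<le> c \<Longrightarrow> c \<le> 1 \<Longrightarrow>
           strict_mono_on {0..c/2} (\<lambda>x. h x + h (c - x)) \<or>
           strict_antimono_on {0..c/2} (\<lambda>x. h x + h (c - x))"
    and "\<And>c. 0 \<le> c \<Longrightarrow> c \<le> 1 \<Longrightarrow>
           strict_mono_on {0..c/2} (\<lambda>x. \<Phi> (h x + h (c - x)))"
    and "m \<ge> 2" and "n \<ge> 2"
    and "\<forall>i<m. p i > 0" and "(\<Sum>i<m. p i) = 1"
    and "\<forall>j<n. q j > 0" and "(\<Sum>j<n. q j) = 1"
  shows "strict_schur_concave_on (mat_vec m n ` transport_polytope m n p q) (phi_h_entropy \<Phi> h)"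
proof -
  have ts: "\<And>S t0 t1 c. 0 \<le> t0 \<Longrightarrow> t0 < t1 \<Longrightarrow> t1 \<le> c/2 \<Longrightarrow> c \<le> 1 \<Longrightarrow>
     \<Phi> (S + (h t0 + h (c - t0))) < \<Phi> (S + (h t1 + h (c - t1)))"
    by (rule tstep[OF assms(3) assms(5)])
  have sym: "\<forall>x y. mset x = mset y \<longrightarrow> phi_h_entropy \<Phi> h x = phi_h_entropy \<Phi> h y"
    unfolding phi_h_entropy_def using sum_list_mset_eq by metis
  have mem: "\<And>x. x \<in> mat_vec m n ` transport_polytope m n p q \<Longrightarrow>
      (\<forall>v\<in>set x. 0 \<le> v) \<and> sum_list x = 1"
    using matvec_props assms(9) by blast
  have "\<forall>x\<in>mat_vec m n ` transport_polytope m n p q. \<forall>y\<in>mat_vec m n ` transport_polytope m n p q.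
     (x \<preceq>\<^sub>M y \<longrightarrow> phi_h_entropy \<Phi> h y \<le> phi_h_entropy \<Phi> h x) \<and>
          (x \<prec>\<^sub>M y \<longrightarrow> phi_h_entropy \<Phi> h y < phi_h_entropy \<Phi> h x)"
  proof (intro ballI)
    fix x y assume x: "x \<in> mat_vec m n ` transport_polytope m n p q"
      and y: "y \<in> mat_vec m n ` transport_polytope m n p q"
    have xn: "\<forall>v\<in>set x. 0 \<le> v" and yn: "\<forall>v\<in>set y. 0 \<le> v" and ys: "sum_list y \<le> 1"
      using mem[OF x] mem[OF y] by auto
    show "(x \<preceq>\<^sub>M y \<longrightarrow> phi_h_entropy \<Phi> h y \<le> phi_h_entropy \<Phi> h x) \<and>
          (x \<prec>\<^sub>M y \<longrightarrow> phi_h_entropy \<Phi> h y < phi_h_entropy \<Phi> h x)"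
      unfolding phi_h_entropy_def
    proof (intro conjI impI)
      assume mj: "x \<preceq>\<^sub>M y"
      show "\<Phi> (sum_list (map h y)) \<le> \<Phi> (sum_list (map h x))"
        using vec_main(1)[where \<Phi>=\<Phi> and h=h, OF ts xn yn ys mj] by simp
    next
      assume lt: "x \<prec>\<^sub>M y"
      hence mj: "x \<preceq>\<^sub>M y" unfolding majorized_lt_def by simp
      show "\<Phi> (sum_list (map h y)) < \<Phi> (sum_list (map h x))"
        using vec_main(2)[where \<Phi>=\<Phi> and h=h, OF ts xn yn ys mj lt] by simp
    qed
  qed
  thus ?thesis unfolding strict_schur_concave_on_def by (rule conjI[OF sym])
qed

end
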